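(* Let $P\in\mathcal{P}$ and $\alpha\in(0,1]$. Then $\limsup_n P_n^\alpha\subset P^\alpha$ almost surely.
   Context: $\mathcal{P}$ denotes the set of all probability measures on $(\mathbb{R}^d,\mathcal{B}_d)$, $\mathcal{B}_d$ the Borel $\sigma$-algebra, endowed with the topology of weak convergence. For $R\in\mathcal{P}$ and $\alpha\in(0,1]$, the $\alpha$-trimming of $R$ is $R^\alpha=\{Q\in\mathcal{P} : Q(B)\le \alpha^{-1}R(B)\text{ for all } B\in\mathcal{B}_d\}$. $\{X_i\}_{i\ge1}$ are i.i.d. random vectors in $\mathbb{R}^d$ with law $P$, and $P_n=\frac1n\sum_{i=1}^n\delta_{X_i}$ is the empirical probability. For sets $A_n\subset\mathcal{P}$, $\liminf_n A_n=\{Q\in\mathcal{P}:\exists\, Q_n\in A_n \text{ for all } n \text{ with } Q_n\to Q \text{ weakly}\}$ and $\limsup_n A_n=\{Q\in\mathcal{P}:\exists\, n_1<n_2<\dots,\ Q_{n_k}\in A_{n_k},\ Q_{n_k}\to Q\text{ weakly}\}$. *)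

theory Defs
  imports "HOL-Probability.Probability"
begin

definition probs :: "('a::topological_space) measure set" where
  "probs = {Q. prob_space Q \<and> sets Q = sets borel}"

definition weak_conv :: "(nat \<Rightarrow> ('a::topological_space) measure) \<Rightarrow> 'a measure \<Rightarrow> bool" where
  "weak_conv Qs Q \<longleftrightarrow>
     (\<forall>f :: 'a \<Rightarrow> real. continuous_on UNIV f \<and> bounded (range f) \<longrightarrow>
        (\<lambda>n. \<integral>x. f x \<partial>(Qs n)) \<longlonglongrightarrow> (\<integral>x. f x \<partial>Q))"

definition trim :: "real \<Rightarrow> ('a::topological_space) measure \<Rightarrow> 'a measure set" where
  "trim \<alpha> R = {Q \<in> probs. \<forall>B \<in> sets borel. measure Q B \<le> measure R B / \<alpha>}"

definition lim_sup_set :: "(nat \<Rightarrow> ('a::topological_space) measure set) \<Rightarrow> 'a measure set" where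
  "lim_sup_set A = {Q \<in> probs. \<exists>r Qs. strict_mono r \<and> (\<forall>k. Qs k \<in> A (r k)) \<and> weak_conv Qs Q}"

definition emp :: "(nat \<Rightarrow> 'w \<Rightarrow> ('a::topological_space)) \<Rightarrow> nat \<Rightarrow> 'w \<Rightarrow> 'a measure" where
  "emp X n w = measure_of UNIV (sets borel)
      (\<lambda>B. ennreal (real (card {i \<in> {1..n}. X i w \<in> B}) / real n))"

end

theory Submission
  imports Defs
begin

lemma (in prob_space) slln_upper:
  fixes X :: "nat \<Rightarrow> 'a \<Rightarrow> 'b::topological_space" and P :: "'b measure"
  assumes meas[measurable]: "\<And>i. X i \<in> borel_measurable M"
    and indep: "indep_vars (\<lambda>_. borel) X UNIV"
    and dX: "\<And>i. distr M borel (X i) = P"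
    and G[measurable]: "G \<in> sets borel" and eps: "\<epsilon> > 0"
  shows "AE w in M. eventually (\<lambda>n. real (card {i\<in>{1..n}. X i w \<in> G}) / real n < measure P G + \<epsilon>) sequentially"
proof -
  define Z where "Z i w = (indicator G (X i w) :: real)" for i w
  have Zm[measurable]: "Z i \<in> borel_measurable M" for i unfolding Z_def by measurable
  have EZ: "expectation (Z 1) = measure P G"
  proof -
    have "expectation (Z 1) = integral\<^sup>L (distr M borel (X 1)) (indicator G)"
      unfolding Z_def by (subst integral_distr) auto
    also have "\<dots> = measure P G"
    proof -
      have "space P = UNIV" using dX[of 1] by (metis space_distr space_borel)
      then show ?thesis using dX[of 1] by simp
    qed
    finally show ?thesis .
  qed
  have indZ: "indep_vars (\<lambda>_. borel) Z UNIV"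
    unfolding Z_def by (rule indep_vars_compose2[OF indep]) auto
  define A where "A n = {w\<in>space M. measure P G + \<epsilon> \<le> (\<Sum>i\<in>{1..n}. Z i w) / real n}" for n
  have Am[measurable]: "A n \<in> sets M" for n unfolding A_def by measurable
  have bound: "measure M (A n) \<le> exp (-2 * \<epsilon>\<^sup>2) ^ n" for n
  proof (cases "n = 0")
    case True then show ?thesis by simp
  next
    case False
    interpret H: Hoeffding_ineq_iid M "{1..n}" Z "Z 1" 0 1 "expectation (Z 1)"
    proof unfold_locales
      show "indep_vars (\<lambda>_. borel) Z {1..n}" by (rule indep_vars_subset[OF indZ]) auto
      show "distr M borel (Z i) = distr M borel (Z 1)" if "i \<in> {1..n}" for i
      proof -
        have "distr M borel (Z i) = distr (distr M borel (X i)) borel (indicator G)"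
          unfolding Z_def by (subst distr_distr) (auto simp: comp_def)
        also have "\<dots> = distr (distr M borel (X 1)) borel (indicator G)" by (simp add: dX)
        also have "\<dots> = distr M borel (Z 1)"
          unfolding Z_def by (subst distr_distr) (auto simp: comp_def)
        finally show ?thesis .
      qed
      show "AE x in M. Z 1 x \<in> {0..1}" by (auto simp: Z_def indicator_def)
    qed auto
    have "measure M (A n) \<le> exp (-2 * real n * \<epsilon>\<^sup>2 / (1 - 0)\<^sup>2)"
      using H.Hoeffding_ineq_ge'[of \<epsilon>] eps False unfolding A_def EZ by simp
    also have "\<dots> = exp (-2 * \<epsilon>\<^sup>2) ^ n" by (simp add: exp_of_nat_mult[symmetric] mult_ac)
    finally show ?thesis .
  qed
  have "summable (\<lambda>n. measure M (A n))"
  proof (rule summable_comparison_test'[OF summable_geometric])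
    show "norm (exp (-2 * \<epsilon>\<^sup>2)) < 1" using eps by simp
    show "norm (measure M (A n)) \<le> exp (-2 * \<epsilon>\<^sup>2) ^ n" for n using bound[of n] by simp
  qed
  then have "AE w in M. eventually (\<lambda>n. w \<in> space M - A n) sequentially"
    by (intro borel_cantelli_AE1) (auto simp: less_top[symmetric])
  then show ?thesis
  proof (rule eventually_mono)
    fix w assume "eventually (\<lambda>n. w \<in> space M - A n) sequentially"
    then show "eventually (\<lambda>n. real (card {i\<in>{1..n}. X i w \<in> G}) / real n < measure P G + \<epsilon>) sequentially"
    proof (rule eventually_mono)
      fix n assume "w \<in> space M - A n"
      moreover have "(\<Sum>i\<in>{1..n}. Z i w) = real (card {i\<in>{1..n}. X i w \<in> G})"
      proof -
        have "(\<Sum>i\<in>{1..n}. Z i w) = (\<Sum>i\<in>{1..n}. indicator {i. X i w \<in> G} i)"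
          unfolding Z_def by (intro sum.cong) (auto simp: indicator_def)
        also have "\<dots> = real (card ({1..n} \<inter> {i. X i w \<in> G}))"
          using arg_cong[OF sum_indicator_eq_card[of "{1..n}" "{i. X i w \<in> G}"], where f=real] by (simp add: of_nat_sum indicator_def)
        finally show ?thesis by (simp add: Int_def conj_commute)
      qed
      ultimately show "real (card {i\<in>{1..n}. X i w \<in> G}) / real n < measure P G + \<epsilon>"
        unfolding A_def by auto
    qed
  qed
qed


lemma probs_meas: "Q \<in> probs \<Longrightarrow> f \<in> borel_measurable borel \<Longrightarrow> f \<in> borel_measurable Q"
  unfolding probs_def using measurable_cong_sets[of Q borel borel borel] by auto

lemma probs_space: "Q \<in> probs \<Longrightarrow> space Q = UNIV"
  unfolding probs_def by (metis (mono_tags, lifting) mem_Collect_eq sets_eq_imp_space_eq space_borel)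

lemma weak_conv_open_le:
  fixes Qs :: "nat \<Rightarrow> 'a::metric_space measure"
  assumes Qs: "\<And>k. Qs k \<in> probs" and Q: "Q \<in> probs" and wc: "weak_conv Qs Q" and G: "open G"
    and ev: "eventually (\<lambda>k. measure (Qs k) G \<le> c) sequentially"
  shows "measure Q G \<le> c"
proof (cases "G = UNIV")
  case True
  obtain k where "measure (Qs k) G \<le> c" using ev eventually_sequentially by auto
  moreover have "prob_space (Qs k)" "prob_space Q" using Qs[of k] Q unfolding probs_def by auto
  ultimately show ?thesis using True probs_space[OF Qs[of k]] probs_space[OF Q]
    by (metis prob_space.prob_space)
next
  case False
  have GB: "G \<in> sets borel" using G by auto
  interpret PQ: prob_space Q using Q unfolding probs_def by auto
  define f where "f m x = min 1 (real m * infdist x (- G))" for m :: nat and x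
  have fc: "continuous_on UNIV (f m)" for m unfolding f_def by (intro continuous_intros)
  have fB: "f m \<in> borel_measurable borel" for m using fc by (simp add: borel_measurable_continuous_onI)
  have f01: "0 \<le> f m x \<and> f m x \<le> 1" for m x unfolding f_def by (auto simp: infdist_nonneg)
  have fb: "bounded (range (f m))" for m
    unfolding bounded_iff using f01 by (intro exI[of _ 1]) auto
  have fle: "f m x \<le> indicator G x" for m x
  proof (cases "x \<in> G")
    case True then show ?thesis using f01 by auto
  next
    case False then have "infdist x (- G) = 0" by (simp add: infdist_zero)
    then show ?thesis using False by (simp add: f_def)
  qed
  have intle: "(\<integral>x. f m x \<partial>Q) \<le> c" for m
  proof -
    have lim: "(\<lambda>k. \<integral>x. f m x \<partial>Qs k) \<longlonglongrightarrow> (\<integral>x. f m x \<partial>Q)"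
      using wc fc fb unfolding weak_conv_def by blast
    have "eventually (\<lambda>k. (\<integral>x. f m x \<partial>Qs k) \<le> c) sequentially"
      using ev
    proof (rule eventually_mono)
      fix k assume ck: "measure (Qs k) G \<le> c"
      interpret PK: prob_space "Qs k" using Qs[of k] unfolding probs_def by auto
      have "(\<integral>x. f m x \<partial>Qs k) \<le> (\<integral>x. indicator G x \<partial>Qs k)"
      proof (rule integral_mono)
        show "integrable (Qs k) (f m)"
          by (rule PK.integrable_const_bound[where B=1]) (use f01 probs_meas[OF Qs fB] in auto)
        show "integrable (Qs k) (indicator G :: _ \<Rightarrow> real)"
          by (rule PK.integrable_const_bound[where B=1])
             (use probs_meas[OF Qs[of k], of "indicator G"] GB in auto)
      qed (rule fle)
      also have "\<dots> = measure (Qs k) G" using probs_space[OF Qs[of k]] by simp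
      finally show "(\<integral>x. f m x \<partial>Qs k) \<le> c" using ck by simp
    qed
    then show ?thesis by (intro tendsto_upperbound[OF lim]) auto
  qed
  have "(\<lambda>m. \<integral>x. f m x \<partial>Q) \<longlonglongrightarrow> (\<integral>x. indicator G x \<partial>Q)"
  proof (rule integral_dominated_convergence[where w="\<lambda>_. 1"])
    show "indicator G \<in> borel_measurable Q" using probs_meas[OF Q, of "indicator G"] GB by auto
    show "f m \<in> borel_measurable Q" for m using probs_meas[OF Q fB] .
    show "integrable Q (\<lambda>_. 1::real)" by simp
    show "AE x in Q. norm (f m x) \<le> 1" for m using f01 by auto
    show "AE x in Q. (\<lambda>m. f m x) \<longlonglongrightarrow> indicator G x"
    proof (intro AE_I2)
      fix x
      show "(\<lambda>m. f m x) \<longlonglongrightarrow> indicator G x"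
      proof (cases "x \<in> G")
        case False then have "infdist x (- G) = 0" by (simp add: infdist_zero)
        then show ?thesis using False by (simp add: f_def)
      next
        case True
        have d: "infdist x (- G) > 0"
          using G False True by (intro infdist_pos_not_in_closed) auto
        obtain N :: nat where N: "1 / infdist x (- G) < real N" using reals_Archimedean2 by blast
        have "eventually (\<lambda>m. f m x = 1) sequentially"
          unfolding eventually_sequentially
        proof (intro exI allI impI)
          fix m assume "N \<le> m"
          then have "1 / infdist x (- G) < real m" using N by linarith
          then have "1 < real m * infdist x (- G)" using d by (simp add: field_simps)
          then show "f m x = 1" by (simp add: f_def)
        qed
        then have "(\<lambda>m. f m x) \<longlonglongrightarrow> 1" by (rule tendsto_eventually)
        then show ?thesis using True by simp
      qed
    qed
  qed
  moreover have "(\<integral>x. indicator G x \<partial>Q) = measure Q G" using probs_space[OF Q] by simp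
  ultimately show ?thesis using intle by (intro tendsto_upperbound) auto
qed


lemma emp_eq_distr:
  fixes X :: "nat \<Rightarrow> 'w \<Rightarrow> 'a::topological_space"
  assumes n: "n \<ge> 1"
  shows "emp X n w = distr (uniform_measure (count_space UNIV) {1..n}) borel (\<lambda>i. X i w)"
    (is "_ = ?N")
proof -
  have sN: "sets ?N = sets borel" and spN: "space ?N = UNIV" by auto
  have eq: "emeasure ?N B = ennreal (real (card {i \<in> {1..n}. X i w \<in> B}) / real n)"
    if B: "B \<in> sets borel" for B
  proof -
    have "emeasure ?N B = emeasure (uniform_measure (count_space UNIV) {1..n}) ((\<lambda>i. X i w) -` B)"
      using B by (subst emeasure_distr) auto
    also have "\<dots> = emeasure (count_space UNIV) ({1..n} \<inter> (\<lambda>i. X i w) -` B) / emeasure (count_space UNIV) {1..n}"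
      by simp
    also have "{1..n} \<inter> (\<lambda>i. X i w) -` B = {i \<in> {1..n}. X i w \<in> B}" by auto
    also have "emeasure (count_space UNIV) {i \<in> {1..n}. X i w \<in> B} / emeasure (count_space UNIV) {1..n}
       = of_nat (card {i \<in> {1..n}. X i w \<in> B}) / of_nat n"
      by simp
    also have "\<dots> = ennreal (real (card {i \<in> {1..n}. X i w \<in> B}) / real n)"
      using n by (simp add: divide_ennreal ennreal_of_nat_eq_real_of_nat)
    finally show ?thesis .
  qed
  have "emp X n w = measure_of UNIV (sets borel) (emeasure ?N)"
    unfolding emp_def
  proof (rule measure_of_eq)
    show "sets borel \<subseteq> Pow UNIV" by auto
    fix a :: "'a set" assume "a \<in> sigma_sets UNIV (sets borel)"
    then have "a \<in> sets borel"
      by (metis sets.sigma_sets_eq space_borel)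
    then show "ennreal (real (card {i \<in> {1..n}. X i w \<in> a}) / real n) = emeasure ?N a"
      using eq by simp
  qed
  also have "\<dots> = ?N" using measure_of_of_measure[of ?N] sN spN by simp
  finally show ?thesis .
qed

lemma emp_measure:
  fixes X :: "nat \<Rightarrow> 'w \<Rightarrow> 'a::topological_space"
  assumes n: "n \<ge> 1" and B: "B \<in> sets borel"
  shows "measure (emp X n w) B = real (card {i\<in>{1..n}. X i w \<in> B}) / real n"
proof -
  have "emeasure (emp X n w) B = ennreal (real (card {i \<in> {1..n}. X i w \<in> B}) / real n)"
    unfolding emp_eq_distr[OF n] using B n
    by (subst emeasure_distr) (auto simp: divide_ennreal ennreal_of_nat_eq_real_of_nat Int_def conj_commute)
  then show ?thesis by (simp add: measure_def)
qed


lemma upper_from_eps: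
  fixes x y :: real
  assumes "\<And>m::nat. x \<le> y + 1 / real (Suc m)"
  shows "x \<le> y"
proof (rule field_le_epsilon)
  fix e :: real assume e: "0 < e"
  obtain m :: nat where "inverse (real (Suc m)) < e" using reals_Archimedean[OF e] by blast
  then show "x \<le> y + e" using assms[of m] by (simp add: inverse_eq_divide)
qed

theorem theorem11:
  fixes \<Omega> :: "'w measure" and X :: "nat \<Rightarrow> 'w \<Rightarrow> 'a::euclidean_space"
    and P :: "'a measure" and \<alpha> :: real
  assumes "prob_space \<Omega>"
    and "P \<in> probs"
    and "0 < \<alpha>" and "\<alpha> \<le> 1"
    and "\<And>i. X i \<in> borel_measurable \<Omega>"
    and "prob_space.indep_vars \<Omega> (\<lambda>_. borel) X UNIV"
    and "\<And>i. distr \<Omega> borel (X i) = P"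
  shows "AE w in \<Omega>. lim_sup_set (\<lambda>n. trim \<alpha> (emp X n w)) \<subseteq> trim \<alpha> P"
proof -
  note assms(1)[simp]
  interpret prob_space \<Omega> by fact
  interpret PP: prob_space P using assms(2) unfolding probs_def by auto
  have sP: "sets P = sets borel" using assms(2) unfolding probs_def by auto
  have spP: "space P = UNIV" using probs_space[OF assms(2)] .
  have a0: "0 < \<alpha>" by fact
  obtain Bs :: "'a set set" where cB: "countable Bs" and tB: "topological_basis Bs"
    using ex_countable_basis by blast
  define \<G> where "\<G> = (\<lambda>F. \<Union>F) ` {F. finite F \<and> F \<subseteq> Bs}"
  have Gopen: "open G" if "G \<in> \<G>" for G
    using that topological_basis_open[OF tB] unfolding \<G>_def by (auto intro!: open_Union)
  have cG: "countable \<G>" unfolding \<G>_def using countable_Collect_finite_subset[OF cB] by simp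
  have AE: "AE w in \<Omega>. \<forall>G\<in>\<G>. \<forall>m::nat. eventually (\<lambda>n. real (card {i\<in>{1..n}. X i w \<in> G}) / real n
              < measure P G + 1 / real (Suc m)) sequentially"
  proof (intro AE_ball_countable' cG AE_all_countable[THEN iffD2] allI)
    fix G m assume "G \<in> \<G>"
    then have "G \<in> sets borel" using Gopen by auto
    then show "AE w in \<Omega>. eventually (\<lambda>n. real (card {i\<in>{1..n}. X i w \<in> G}) / real n
              < measure P G + 1 / real (Suc m)) sequentially"
      by (intro slln_upper assms) auto
  qed
  then show ?thesis
  proof (rule eventually_mono)
    fix w assume H: "\<forall>G\<in>\<G>. \<forall>m::nat. eventually (\<lambda>n. real (card {i\<in>{1..n}. X i w \<in> G}) / real n
              < measure P G + 1 / real (Suc m)) sequentially"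
    show "lim_sup_set (\<lambda>n. trim \<alpha> (emp X n w)) \<subseteq> trim \<alpha> P"
    proof
      fix Q assume "Q \<in> lim_sup_set (\<lambda>n. trim \<alpha> (emp X n w))"
      then obtain r Qs where Q: "Q \<in> probs" and r: "strict_mono r"
        and Qs: "\<And>k. Qs k \<in> trim \<alpha> (emp X (r k) w)" and wc: "weak_conv Qs Q"
        unfolding lim_sup_set_def by blast
      have Qsp: "Qs k \<in> probs" for k using Qs[of k] unfolding trim_def by auto
      interpret PQ: prob_space Q using Q unfolding probs_def by auto
      have sQ: "sets Q = sets borel" using Q unfolding probs_def by auto
      have spQ: "space Q = UNIV" using probs_space[OF Q] .
      have rlim: "filterlim r sequentially sequentially" using r by (rule filterlim_subseq)
      have step1: "measure Q G \<le> measure P G / \<alpha>" if G: "G \<in> \<G>" for G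
      proof -
        have GB: "G \<in> sets borel" using Gopen[OF G] by auto
        have "measure Q G * \<alpha> \<le> measure P G + 1 / real (Suc m)" for m
        proof -
          have ev1: "eventually (\<lambda>k. real (card {i\<in>{1..r k}. X i w \<in> G}) / real (r k)
              < measure P G + 1 / real (Suc m)) sequentially"
            using H G rlim unfolding filterlim_iff by blast
          have ev2: "eventually (\<lambda>k. 1 \<le> r k) sequentially"
            using rlim unfolding filterlim_iff by (auto simp: eventually_ge_at_top)
          have "eventually (\<lambda>k. measure (Qs k) G \<le> (measure P G + 1 / real (Suc m)) / \<alpha>) sequentially"
            using ev1 ev2
          proof eventually_elim
            case (elim k)
            have "measure (Qs k) G \<le> measure (emp X (r k) w) G / \<alpha>"
              using Qs[of k] GB unfolding trim_def by auto
            also have "\<dots> = real (card {i\<in>{1..r k}. X i w \<in> G}) / real (r k) / \<alpha>"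
              using emp_measure[OF elim(2) GB, of X w] by simp
            also have "\<dots> \<le> (measure P G + 1 / real (Suc m)) / \<alpha>"
              using elim(1) a0 by (intro divide_right_mono) auto
            finally show ?case .
          qed
          then have "measure Q G \<le> (measure P G + 1 / real (Suc m)) / \<alpha>"
            by (rule weak_conv_open_le[OF Qsp Q wc Gopen[OF G]])
          then show ?thesis using a0 by (simp add: pos_le_divide_eq)
        qed
        then have "measure Q G * \<alpha> \<le> measure P G" by (rule upper_from_eps)
        then show ?thesis using a0 by (simp add: pos_le_divide_eq)
      qed
      have step2: "measure Q U \<le> measure P U / \<alpha>" if U: "open U" for U
      proof -
        define C where "C = {b\<in>Bs. b \<subseteq> U}"
        have cC: "countable C" unfolding C_def using cB by auto
        have UC: "\<Union>C = U"
        proof -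
          obtain B' where "B' \<subseteq> Bs" "\<Union>B' = U" using tB U unfolding topological_basis_def by blast
          then show ?thesis unfolding C_def by auto
        qed
        show ?thesis
        proof (cases "C = {}")
          case True then show ?thesis using UC by auto
        next
          case False
          define e where "e = from_nat_into C"
          have re: "range e = C" unfolding e_def using False cC by simp
          define A where "A k = \<Union>(e ` {..k})" for k
          have eC: "e k \<in> C" for k using re by auto
          have AG: "A k \<in> \<G>" for k
            unfolding A_def \<G>_def
          proof (rule image_eqI[where x="e ` {..k}"])
            show "e ` {..k} \<in> {F. finite F \<and> F \<subseteq> Bs}" using eC unfolding C_def by auto
          qed simp
          have AU: "A k \<subseteq> U" for k unfolding A_def using eC unfolding C_def by auto
          have inc: "incseq A" unfolding A_def incseq_def by (intro allI impI UN_mono) auto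
          have UA: "(\<Union>k. A k) = U"
          proof
            show "(\<Union>k. A k) \<subseteq> U" using AU by auto
            show "U \<subseteq> (\<Union>k. A k)"
            proof
              fix x assume "x \<in> U"
              then obtain b where "b \<in> C" "x \<in> b" using UC by auto
              then obtain k where "e k = b" using re by auto
              then show "x \<in> (\<Union>k. A k)" using \<open>x \<in> b\<close> unfolding A_def by auto
            qed
          qed
          have AB: "range A \<subseteq> sets Q" using AG Gopen sQ by auto
          have lim: "(\<lambda>k. measure Q (A k)) \<longlonglongrightarrow> measure Q U"
            using PQ.finite_Lim_measure_incseq[OF AB inc] UA by simp
          have "measure Q (A k) \<le> measure P U / \<alpha>" for k
          proof -
            have "measure Q (A k) \<le> measure P (A k) / \<alpha>" using step1[OF AG] .
            also have "\<dots> \<le> measure P U / \<alpha>"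
              using AU[of k] U AG[of k] Gopen sP a0
              by (intro divide_right_mono PP.finite_measure_mono) auto
            finally show ?thesis .
          qed
          then show ?thesis using lim by (intro tendsto_upperbound) auto
        qed
      qed
      have step3: "measure Q B \<le> measure P B / \<alpha>" if B: "B \<in> sets borel" for B
      proof -
        have "measure Q B * \<alpha> \<le> measure P B + e" if e: "e > 0" for e
        proof -
          have PB: "emeasure P B = (INF U \<in> {U. B \<subseteq> U \<and> open U}. emeasure P U)"
            using outer_regular[OF sP _ B] by simp
          have mB: "0 \<le> measure P B" by simp
          have "ennreal (measure P B) < ennreal (measure P B + e)"
            using e mB by (subst ennreal_less_iff) auto
          then have "emeasure P B < ennreal (measure P B + e)"
            by (simp add: PP.emeasure_eq_measure)
          then have "(INF U \<in> {U. B \<subseteq> U \<and> open U}. emeasure P U) < ennreal (measure P B + e)"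
            unfolding PB .
          then obtain U where U: "B \<subseteq> U" "open U" and PU: "emeasure P U < ennreal (measure P B + e)"
            unfolding INF_less_iff by blast
          have PU': "measure P U < measure P B + e"
            using PU by (simp add: PP.emeasure_eq_measure ennreal_less_iff)
          have "measure Q B \<le> measure Q U"
            using U B sQ by (intro PQ.finite_measure_mono) auto
          then have "measure Q B * \<alpha> \<le> measure Q U * \<alpha>"
            using a0 by (intro mult_right_mono) auto
          also have "measure Q U * \<alpha> \<le> measure P U"
            using step2[OF U(2)] a0 by (simp add: pos_le_divide_eq)
          finally show ?thesis using PU' by linarith
        qed
        then have "measure Q B * \<alpha> \<le> measure P B" by (rule field_le_epsilon)
        then show ?thesis using a0 by (simp add: pos_le_divide_eq)
      qed
      show "Q \<in> trim \<alpha> P" unfolding trim_def using Q step3 by auto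
    qed
  qed
qed

end
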